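(* If $A$ is a polyomino with $n$ tiles and $h$ holes, then $p_o(A)\ge 2\lceil 2\sqrt{n+h}\,\rceil$.
   Context: A polyomino is a finite union of closed unit squares (tiles) of the square lattice, any two meeting (if at all) in a whole edge, whose interior is connected. Its holes are the bounded connected components of its complement in the plane. The outer perimeter of $A$ is the set of unit edges on the topological boundary of $A$ that do not bound a hole; $p_o(A)$ is its number of edges. *)

theory Defs
  imports "HOL-Analysis.Analysis"
begin

text \<open>Lattice cells are indexed by their lower-left corner (i,j) in int x int.
  The tile of cell (i,j) is the closed unit square [i,i+1] x [j,j+1] in the plane.\<close>

definition tile :: "int \<times> int \<Rightarrow> (real \<times> real) set" where
  "tile c = {(x, y). of_int (fst c) \<le> x \<and> x \<le> of_int (fst c) + 1 \<and>
                     of_int (snd c) \<le> y \<and> y \<le> of_int (snd c) + 1}"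

definition region :: "(int \<times> int) set \<Rightarrow> (real \<times> real) set" where
  "region T = (\<Union>c\<in>T. tile c)"

definition polyomino :: "(int \<times> int) set \<Rightarrow> bool" where
  "polyomino T \<longleftrightarrow> finite T \<and> T \<noteq> {} \<and> connected (interior (region T))"

definition holes :: "(int \<times> int) set \<Rightarrow> (real \<times> real) set set" where
  "holes T = {C \<in> components (- region T). bounded C}"

definition hedge :: "int \<times> int \<Rightarrow> (real \<times> real) set" where
  "hedge c = {(x, y). of_int (fst c) \<le> x \<and> x \<le> of_int (fst c) + 1 \<and> y = of_int (snd c)}"

definition vedge :: "int \<times> int \<Rightarrow> (real \<times> real) set" where
  "vedge c = {(x, y). x = of_int (fst c) \<and> of_int (snd c) \<le> y \<and> y \<le> of_int (snd c) + 1}"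

definition unit_edges :: "(real \<times> real) set set" where
  "unit_edges = range hedge \<union> range vedge"

definition outer_perimeter :: "(int \<times> int) set \<Rightarrow> (real \<times> real) set set" where
  "outer_perimeter T = {e \<in> unit_edges. e \<subseteq> frontier (region T) \<and>
                         \<not> (\<exists>H\<in>holes T. e \<subseteq> frontier H)}"

definition p_o :: "(int \<times> int) set \<Rightarrow> nat" where
  "p_o T = card (outer_perimeter T)"

end

theory Submission
  imports Defs
begin

lemma int_pin:
  fixes x :: real
  assumes "of_int i < x" "x < of_int i + 1" "of_int a \<le> x" "x \<le> of_int a + 1"
  shows "a = i"
proof -
  have "of_int a < (of_int (i+1)::real)" using assms by simp
  hence "a < i + 1" by (simp only: of_int_less_iff)
  moreover have "of_int i < (of_int (a+1)::real)" using assms by simp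
  hence "i < a + 1" by (simp only: of_int_less_iff)
  ultimately show ?thesis by simp
qed

lemma tile_Times: "tile c = {of_int (fst c)..of_int (fst c)+1} \<times> {of_int (snd c)..of_int (snd c)+1}"
  by (auto simp: tile_def)

lemma mem_tile: "(x, y) \<in> tile (a, b) \<longleftrightarrow>
   of_int a \<le> x \<and> x \<le> of_int a + 1 \<and> of_int b \<le> y \<and> y \<le> of_int b + 1"
  by (simp add: tile_def)

lemma mem_region: "p \<in> region T \<longleftrightarrow> (\<exists>c\<in>T. p \<in> tile c)"
  by (simp add: region_def)

lemma closed_region: "finite T \<Longrightarrow> closed (region T)"
  unfolding region_def by (intro closed_UN) (auto simp: tile_Times intro: closed_Times)

lemma unbounded_Times2:
  fixes A B :: "real set" assumes "A \<noteq> {}" "\<not> bounded B" shows "\<not> bounded (A \<times> B)"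
proof
  assume "bounded (A \<times> B)"
  then obtain a where a: "\<And>z. z \<in> A \<times> B \<Longrightarrow> norm z \<le> a" by (auto simp: bounded_iff)
  obtain x0 where "x0 \<in> A" using assms by auto
  have "bounded B" unfolding bounded_iff
  proof (intro exI ballI)
    fix y assume "y \<in> B"
    have "norm y \<le> norm (x0, y)" by (rule norm_snd_le)
    also have "\<dots> \<le> a" using a \<open>x0 \<in> A\<close> \<open>y \<in> B\<close> by auto
    finally show "norm y \<le> a" .
  qed
  thus False using assms by simp
qed

lemma unbounded_Times1:
  fixes A B :: "real set" assumes "B \<noteq> {}" "\<not> bounded A" shows "\<not> bounded (A \<times> B)"
proof
  assume "bounded (A \<times> B)"
  then obtain a where a: "\<And>z. z \<in> A \<times> B \<Longrightarrow> norm z \<le> a" by (auto simp: bounded_iff)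
  obtain y0 where "y0 \<in> B" using assms by auto
  have "bounded A" unfolding bounded_iff
  proof (intro exI ballI)
    fix y assume "y \<in> A"
    have "norm y \<le> norm (y, y0)" by (rule norm_fst_le)
    also have "\<dots> \<le> a" using a \<open>y0 \<in> B\<close> \<open>y \<in> A\<close> by auto
    finally show "norm y \<le> a" .
  qed
  thus False using assms by simp
qed

lemma unbounded_lessThan: "\<not> bounded {..<(a::real)}"
proof
  assume "bounded {..<a}"
  then obtain B where B: "\<And>x. x < a \<Longrightarrow> \<bar>x\<bar> \<le> B" by (auto simp: bounded_real)
  have "\<bar>min (a - 1) (- \<bar>B\<bar> - 1)\<bar> \<le> B" by (rule B) auto
  thus False by linarith
qed

lemma unbounded_greaterThan: "\<not> bounded {(a::real)<..}"
proof
  assume "bounded {a<..}"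
  then obtain B where B: "\<And>x. x > a \<Longrightarrow> \<bar>x\<bar> \<le> B" by (auto simp: bounded_real)
  have "\<bar>max (a + 1) (\<bar>B\<bar> + 1)\<bar> \<le> B" by (rule B) auto
  thus False by linarith
qed

lemma unbounded_UNIV: "\<not> bounded (UNIV::real set)"
  using unbounded_lessThan bounded_subset by blast

lemma generic_edge:
  assumes "c \<in> T" "e \<subseteq> tile c" "e \<in> unit_edges" "connected D" "\<not> bounded D"
    "D \<inter> region T = {}" "e \<subseteq> closure D" "open U" "q \<in> U" "q \<in> e" "U \<subseteq> region T \<union> D"
  shows "e \<in> outer_perimeter T"
proof -
  have er: "e \<subseteq> region T" using assms(1,2) by (auto simp: region_def)
  have "interior (region T) \<inter> D = {}" using assms(6) interior_subset by blast
  hence "interior (region T) \<inter> closure D = {}" by (simp add: open_Int_closure_eq_empty)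
  moreover have "region T \<subseteq> closure (region T)" by (rule closure_subset)
  ultimately have "e \<subseteq> frontier (region T)" using er assms(7)
    unfolding frontier_def by blast
  moreover have "\<not> e \<subseteq> frontier H" if H: "H \<in> holes T" for H
  proof
    assume eH: "e \<subseteq> frontier H"
    have Hc: "H \<in> components (- region T)" and Hb: "bounded H" using H by (auto simp: holes_def)
    have "D \<inter> H = {}"
    proof (rule ccontr)
      assume "D \<inter> H \<noteq> {}"
      hence "D \<subseteq> H" using components_maximal[OF Hc assms(4)] assms(6) by blast
      thus False using Hb assms(5) bounded_subset by blast
    qed
    moreover have "H \<subseteq> - region T" using Hc in_components_subset by blast
    ultimately have "U \<inter> H = {}" using assms(11) by blast
    hence "U \<inter> closure H = {}" using assms(8) by (simp add: open_Int_closure_eq_empty)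
    moreover have "q \<in> closure H" using eH assms(10) by (auto simp: frontier_def)
    ultimately show False using assms(9) by blast
  qed
  ultimately show ?thesis using assms(3) by (auto simp: outer_perimeter_def)
qed


lemma hedge_in: "hedge c \<in> unit_edges" by (simp add: unit_edges_def)
lemma vedge_in: "vedge c \<in> unit_edges" by (simp add: unit_edges_def)

lemma edge_bottom:
  assumes "(i,j0) \<in> T" "\<And>j. (i,j) \<in> T \<Longrightarrow> j0 \<le> j"
  shows "hedge (i,j0) \<in> outer_perimeter T"
proof (rule generic_edge[OF assms(1) _ hedge_in, where
    D = "{of_int i<..<of_int i+1} \<times> {..<of_int j0}" and
    U = "{of_int i<..<of_int i+1} \<times> {..<of_int j0 + 1}" and q = "(of_int i + 1/2, of_int j0)"])
  show "hedge (i, j0) \<subseteq> tile (i, j0)" by (auto simp: hedge_def tile_def)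
  show "connected ({(of_int i::real)<..<of_int i+1} \<times> {..<(of_int j0::real)})"
    by (intro connected_Times) simp_all
  show "\<not> bounded ({(of_int i::real)<..<of_int i+1} \<times> {..<(of_int j0::real)})"
    by (rule unbounded_Times2) (auto simp: unbounded_lessThan)
  show "({(of_int i::real)<..<of_int i+1} \<times> {..<of_int j0}) \<inter> region T = {}"
  proof (rule ccontr)
    assume "\<not> ?thesis"
    then obtain x y a b where "(a,b) \<in> T" "(x,y) \<in> tile (a,b)" "of_int i < x" "x < of_int i + 1" "y < of_int j0"
      by (auto simp: mem_region)
    moreover from this have "a = i" by (intro int_pin[of i x]) (auto simp: mem_tile)
    ultimately show False using assms(2)[of b] by (auto simp: mem_tile)
  qed
  show "hedge (i, j0) \<subseteq> closure ({of_int i<..<of_int i+1} \<times> {..<of_int j0})"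
    by (auto simp: closure_Times closure_lessThan hedge_def)
  show "open ({(of_int i::real)<..<of_int i+1} \<times> {..<(of_int j0::real) + 1})"
    by (intro open_Times) auto
  show "((of_int i::real) + 1/2, of_int j0) \<in> {of_int i<..<of_int i+1} \<times> {..<(of_int j0::real) + 1}" by simp
  show "((of_int i::real) + 1/2, of_int j0) \<in> hedge (i, j0)" by (simp add: hedge_def)
  show "{(of_int i::real)<..<of_int i+1} \<times> {..<of_int j0 + 1} \<subseteq> region T \<union> ({of_int i<..<of_int i+1} \<times> {..<of_int j0})"
  proof
    fix p assume "p \<in> {(of_int i::real)<..<of_int i+1} \<times> {..<(of_int j0::real) + 1}"
    then obtain x y where p: "p = (x,y)" "of_int i < x" "x < of_int i + 1" "y < of_int j0 + 1" by auto
    show "p \<in> region T \<union> ({of_int i<..<of_int i+1} \<times> {..<of_int j0})"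
    proof (cases "y < of_int j0")
      case False
      hence "p \<in> tile (i,j0)" using p by (simp add: mem_tile)
      thus ?thesis using assms(1) by (auto simp: mem_region)
    qed (use p in auto)
  qed
qed


lemma edge_top:
  assumes "(i,jm) \<in> T" "\<And>j. (i,j) \<in> T \<Longrightarrow> j \<le> jm"
  shows "hedge (i,jm+1) \<in> outer_perimeter T"
proof (rule generic_edge[OF assms(1) _ hedge_in, where
    D = "{of_int i<..<of_int i+1} \<times> {of_int jm + 1<..}" and
    U = "{of_int i<..<of_int i+1} \<times> {of_int jm<..}" and q = "(of_int i + 1/2, of_int jm + 1)"])
  show "hedge (i, jm+1) \<subseteq> tile (i, jm)" by (auto simp: hedge_def tile_def)
  show "connected ({(of_int i::real)<..<of_int i+1} \<times> {(of_int jm::real) + 1<..})"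
    by (intro connected_Times) simp_all
  show "\<not> bounded ({(of_int i::real)<..<of_int i+1} \<times> {(of_int jm::real) + 1<..})"
    by (rule unbounded_Times2) (auto simp: unbounded_greaterThan)
  show "({(of_int i::real)<..<of_int i+1} \<times> {of_int jm + 1<..}) \<inter> region T = {}"
  proof (rule ccontr)
    assume "\<not> ?thesis"
    then obtain x y a b where "(a,b) \<in> T" "(x,y) \<in> tile (a,b)" "of_int i < x" "x < of_int i + 1" "y > of_int jm + 1"
      by (auto simp: mem_region)
    moreover from this have "a = i" by (intro int_pin[of i x]) (auto simp: mem_tile)
    moreover from calculation have "(of_int b::real) \<le> of_int jm" using assms(2)[of b] by simp
    ultimately show False by (auto simp: mem_tile)
  qed
  show "hedge (i, jm+1) \<subseteq> closure ({(of_int i::real)<..<of_int i+1} \<times> {of_int jm + 1<..})"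
    by (auto simp: closure_Times closure_greaterThan hedge_def)
  show "open ({(of_int i::real)<..<of_int i+1} \<times> {(of_int jm::real)<..})"
    by (intro open_Times) auto
  show "((of_int i::real) + 1/2, of_int jm + 1) \<in> {(of_int i::real)<..<of_int i+1} \<times> {(of_int jm::real)<..}" by simp
  show "((of_int i::real) + 1/2, of_int jm + 1) \<in> hedge (i, jm+1)" by (simp add: hedge_def)
  show "{(of_int i::real)<..<of_int i+1} \<times> {of_int jm<..} \<subseteq> region T \<union> ({of_int i<..<of_int i+1} \<times> {of_int jm + 1<..})"
  proof
    fix p assume "p \<in> {(of_int i::real)<..<of_int i+1} \<times> {(of_int jm::real)<..}"
    then obtain x y where p: "p = (x,y)" "of_int i < x" "x < of_int i + 1" "y > of_int jm" by auto
    show "p \<in> region T \<union> ({of_int i<..<of_int i+1} \<times> {of_int jm + 1<..})"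
    proof (cases "y > of_int jm + 1")
      case False
      hence "p \<in> tile (i,jm)" using p by (simp add: mem_tile)
      thus ?thesis using assms(1) by (auto simp: mem_region)
    qed (use p in auto)
  qed
qed

lemma edge_left:
  assumes "(i0,j) \<in> T" "\<And>i. (i,j) \<in> T \<Longrightarrow> i0 \<le> i"
  shows "vedge (i0,j) \<in> outer_perimeter T"
proof (rule generic_edge[OF assms(1) _ vedge_in, where
    D = "{..<of_int i0} \<times> {of_int j<..<of_int j+1}" and
    U = "{..<of_int i0 + 1} \<times> {of_int j<..<of_int j+1}" and q = "(of_int i0, of_int j + 1/2)"])
  show "vedge (i0, j) \<subseteq> tile (i0, j)" by (auto simp: vedge_def tile_def)
  show "connected ({..<(of_int i0::real)} \<times> {(of_int j::real)<..<of_int j+1})"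
    by (intro connected_Times) simp_all
  show "\<not> bounded ({..<(of_int i0::real)} \<times> {(of_int j::real)<..<of_int j+1})"
    by (rule unbounded_Times1) (auto simp: unbounded_lessThan)
  show "({..<(of_int i0::real)} \<times> {(of_int j::real)<..<of_int j+1}) \<inter> region T = {}"
  proof (rule ccontr)
    assume "\<not> ?thesis"
    then obtain x y a b where "(a,b) \<in> T" "(x,y) \<in> tile (a,b)" "of_int j < y" "y < of_int j + 1" "x < of_int i0"
      by (auto simp: mem_region)
    moreover from this have "b = j" by (intro int_pin[of j y]) (auto simp: mem_tile)
    ultimately show False using assms(2)[of a] by (auto simp: mem_tile)
  qed
  show "vedge (i0, j) \<subseteq> closure ({..<(of_int i0::real)} \<times> {(of_int j::real)<..<of_int j+1})"
    by (auto simp: closure_Times closure_lessThan vedge_def)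
  show "open ({..<(of_int i0::real) + 1} \<times> {(of_int j::real)<..<of_int j+1})"
    by (intro open_Times) auto
  show "((of_int i0::real), (of_int j::real) + 1/2) \<in> {..<(of_int i0::real) + 1} \<times> {(of_int j::real)<..<of_int j+1}" by simp
  show "((of_int i0::real), (of_int j::real) + 1/2) \<in> vedge (i0, j)" by (simp add: vedge_def)
  show "{..<(of_int i0::real) + 1} \<times> {(of_int j::real)<..<of_int j+1} \<subseteq> region T \<union> ({..<of_int i0} \<times> {of_int j<..<of_int j+1})"
  proof
    fix p assume "p \<in> {..<(of_int i0::real) + 1} \<times> {(of_int j::real)<..<of_int j+1}"
    then obtain x y where p: "p = (x,y)" "of_int j < y" "y < of_int j + 1" "x < of_int i0 + 1" by auto
    show "p \<in> region T \<union> ({..<of_int i0} \<times> {of_int j<..<of_int j+1})"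
    proof (cases "x < of_int i0")
      case False
      hence "p \<in> tile (i0,j)" using p by (simp add: mem_tile)
      thus ?thesis using assms(1) by (auto simp: mem_region)
    qed (use p in auto)
  qed
qed

lemma edge_right:
  assumes "(im,j) \<in> T" "\<And>i. (i,j) \<in> T \<Longrightarrow> i \<le> im"
  shows "vedge (im+1,j) \<in> outer_perimeter T"
proof (rule generic_edge[OF assms(1) _ vedge_in, where
    D = "{of_int im + 1<..} \<times> {of_int j<..<of_int j+1}" and
    U = "{of_int im<..} \<times> {of_int j<..<of_int j+1}" and q = "(of_int im + 1, of_int j + 1/2)"])
  show "vedge (im+1, j) \<subseteq> tile (im, j)" by (auto simp: vedge_def tile_def)
  show "connected ({(of_int im::real) + 1<..} \<times> {(of_int j::real)<..<of_int j+1})"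
    by (intro connected_Times) simp_all
  show "\<not> bounded ({(of_int im::real) + 1<..} \<times> {(of_int j::real)<..<of_int j+1})"
    by (rule unbounded_Times1) (auto simp: unbounded_greaterThan)
  show "({(of_int im::real) + 1<..} \<times> {(of_int j::real)<..<of_int j+1}) \<inter> region T = {}"
  proof (rule ccontr)
    assume "\<not> ?thesis"
    then obtain x y a b where "(a,b) \<in> T" "(x,y) \<in> tile (a,b)" "of_int j < y" "y < of_int j + 1" "x > of_int im + 1"
      by (auto simp: mem_region)
    moreover from this have "b = j" by (intro int_pin[of j y]) (auto simp: mem_tile)
    moreover from calculation have "(of_int a::real) \<le> of_int im" using assms(2)[of a] by simp
    ultimately show False by (auto simp: mem_tile)
  qed
  show "vedge (im+1, j) \<subseteq> closure ({(of_int im::real) + 1<..} \<times> {(of_int j::real)<..<of_int j+1})"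
    by (auto simp: closure_Times closure_greaterThan vedge_def)
  show "open ({(of_int im::real)<..} \<times> {(of_int j::real)<..<of_int j+1})"
    by (intro open_Times) auto
  show "((of_int im::real) + 1, (of_int j::real) + 1/2) \<in> {(of_int im::real)<..} \<times> {(of_int j::real)<..<of_int j+1}" by simp
  show "((of_int im::real) + 1, (of_int j::real) + 1/2) \<in> vedge (im+1, j)" by (simp add: vedge_def)
  show "{(of_int im::real)<..} \<times> {(of_int j::real)<..<of_int j+1} \<subseteq> region T \<union> ({of_int im + 1<..} \<times> {of_int j<..<of_int j+1})"
  proof
    fix p assume "p \<in> {(of_int im::real)<..} \<times> {(of_int j::real)<..<of_int j+1}"
    then obtain x y where p: "p = (x,y)" "of_int j < y" "y < of_int j + 1" "x > of_int im" by auto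
    show "p \<in> region T \<union> ({of_int im + 1<..} \<times> {of_int j<..<of_int j+1})"
    proof (cases "x > of_int im + 1")
      case False
      hence "p \<in> tile (im,j)" using p by (simp add: mem_tile)
      thus ?thesis using assms(1) by (auto simp: mem_region)
    qed (use p in auto)
  qed
qed


definition ocell :: "int \<times> int \<Rightarrow> (real \<times> real) set" where
  "ocell c = {of_int (fst c)<..<of_int (fst c)+1} \<times> {of_int (snd c)<..<of_int (snd c)+1}"

lemma ocell_region: "c \<notin> T \<Longrightarrow> ocell c \<inter> region T = {}"
proof (rule ccontr)
  assume "c \<notin> T" "ocell c \<inter> region T \<noteq> {}"
  then obtain x y a b where "(a,b) \<in> T" "(x,y) \<in> tile (a,b)" "(x,y) \<in> ocell c"
    by (auto simp: mem_region)
  moreover from this have "a = fst c" by (intro int_pin[of "fst c" x]) (auto simp: mem_tile ocell_def)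
  moreover from calculation have "b = snd c" by (intro int_pin[of "snd c" y]) (auto simp: mem_tile ocell_def)
  ultimately show False using \<open>c \<notin> T\<close> by (cases c) auto
qed

lemma hole_cell:
  assumes "finite T" "H \<in> holes T"
  shows "\<exists>c. c \<notin> T \<and> fst c \<in> fst ` T \<and> snd c \<in> snd ` T \<and> ocell c \<subseteq> H"
proof -
  have Hc: "H \<in> components (- region T)" and Hb: "bounded H" using assms(2) by (auto simp: holes_def)
  have op: "open (- region T)" using closed_region[OF assms(1)] by (simp add: open_Compl)
  have "open H" using open_components[OF op Hc] .
  have HR: "H \<subseteq> - region T" using Hc in_components_subset by blast
  obtain p where "p \<in> H" using Hc in_components_nonempty by blast
  then obtain r where r: "r > 0" "ball p r \<subseteq> H" using \<open>open H\<close> open_contains_ball by blast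
  obtain x y where pxy: "p = (x,y)" by (cases p)
  define t where "t = min (r/4) (min ((1 - frac x)/2) ((1 - frac y)/2))"
  have "frac x < 1" "frac y < 1" by (simp_all add: frac_lt_1)
  hence t0: "t > 0" using r by (simp add: t_def)
  have "dist p (x+t, y+t) = sqrt (t^2 + t^2)" using t0 by (simp add: pxy dist_Pair_Pair dist_real_def)
  also have "\<dots> \<le> \<bar>t\<bar> + \<bar>t\<bar>" by (rule sqrt_sum_squares_le_sum_abs)
  also have "\<dots> < r" using t0 r by (simp add: t_def)
  finally have p'H: "(x+t, y+t) \<in> H" using r by auto
  define c where "c = (\<lfloor>x\<rfloor>, \<lfloor>y\<rfloor>)"
  have fx: "x = of_int \<lfloor>x\<rfloor> + frac x" "y = of_int \<lfloor>y\<rfloor> + frac y" by (simp_all add: frac_def)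
  have "t < 1 - frac x" "t < 1 - frac y" using \<open>frac x < 1\<close> \<open>frac y < 1\<close> unfolding t_def by (simp_all add: min_def)
  moreover have "frac x \<ge> 0" "frac y \<ge> 0" by (simp_all add: frac_ge_0)
  ultimately have p'c: "(x+t, y+t) \<in> ocell c" using t0 fx by (simp add: ocell_def c_def) linarith
  have "(x+t, y+t) \<in> tile c" using p'c by (auto simp: ocell_def tile_def)
  hence cT: "c \<notin> T" using p'H HR by (auto simp: mem_region)
  have "connected (ocell c)" by (simp add: ocell_def connected_Times)
  moreover have "ocell c \<subseteq> - region T" using ocell_region[OF cT] by blast
  moreover have "H \<inter> ocell c \<noteq> {}" using p'c p'H by blast
  ultimately have "ocell c \<subseteq> H" by (rule components_maximal[OF Hc])
  moreover have "fst c \<in> fst ` T"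
  proof (rule ccontr)
    assume nc: "fst c \<notin> fst ` T"
    let ?S = "{(of_int (fst c)::real)<..<of_int (fst c)+1} \<times> (UNIV::real set)"
    have "?S \<inter> region T = {}"
    proof (rule ccontr)
      assume "\<not> ?thesis"
      then obtain u v a b where "(a,b) \<in> T" "(u,v) \<in> tile (a,b)" "(u,v) \<in> ?S"
        unfolding mem_region by (metis disjoint_iff mem_region prod.exhaust_sel)
      moreover from this have "a = fst c" by (intro int_pin[of "fst c" u]) (auto simp: mem_tile)
      ultimately show False using nc by (metis fst_conv snd_conv image_eqI)
    qed
    hence "?S \<subseteq> - region T" by blast
    moreover have "connected ?S" by (simp add: connected_Times)
    moreover have "H \<inter> ?S \<noteq> {}" using p'c p'H by (auto simp: ocell_def)
    ultimately have "?S \<subseteq> H" using components_maximal[OF Hc] by blast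
    moreover have "\<not> bounded ?S" by (rule unbounded_Times2) (auto simp: unbounded_UNIV)
    ultimately show False using Hb bounded_subset by blast
  qed
  moreover have "snd c \<in> snd ` T"
  proof (rule ccontr)
    assume nc: "snd c \<notin> snd ` T"
    let ?S = "(UNIV::real set) \<times> {(of_int (snd c)::real)<..<of_int (snd c)+1}"
    have "?S \<inter> region T = {}"
    proof (rule ccontr)
      assume "\<not> ?thesis"
      then obtain u v a b where "(a,b) \<in> T" "(u,v) \<in> tile (a,b)" "(u,v) \<in> ?S"
        unfolding mem_region by (metis disjoint_iff mem_region prod.exhaust_sel)
      moreover from this have "b = snd c" by (intro int_pin[of "snd c" v]) (auto simp: mem_tile)
      ultimately show False using nc by (metis fst_conv snd_conv image_eqI)
    qed
    hence "?S \<subseteq> - region T" by blast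
    moreover have "connected ?S" by (simp add: connected_Times)
    moreover have "H \<inter> ?S \<noteq> {}" using p'c p'H by (auto simp: ocell_def)
    ultimately have "?S \<subseteq> H" using components_maximal[OF Hc] by blast
    moreover have "\<not> bounded ?S" by (rule unbounded_Times1) (auto simp: unbounded_UNIV)
    ultimately show False using Hb bounded_subset by blast
  qed
  ultimately show ?thesis using cT by blast
qed


lemma hedge_inj: "hedge c = hedge d \<Longrightarrow> c = d"
proof -
  assume h: "hedge c = hedge d"
  have "(of_int (fst c), of_int (snd c)) \<in> hedge d" using h[symmetric] by (simp add: hedge_def)
  moreover have "(of_int (fst d), of_int (snd d)) \<in> hedge c" using h by (simp add: hedge_def)
  ultimately show "c = d" by (cases c, cases d) (auto simp: hedge_def)
qed

lemma vedge_inj: "vedge c = vedge d \<Longrightarrow> c = d"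
proof -
  assume h: "vedge c = vedge d"
  have "(of_int (fst c), of_int (snd c)) \<in> vedge d" using h[symmetric] by (simp add: vedge_def)
  moreover have "(of_int (fst d), of_int (snd d)) \<in> vedge c" using h by (simp add: vedge_def)
  ultimately show "c = d" by (cases c, cases d) (auto simp: vedge_def)
qed

lemma hedge_ne_vedge: "hedge c \<noteq> vedge d"
proof
  assume h: "hedge c = vedge d"
  have "(of_int (fst c) + 1/2, of_int (snd c)) \<in> vedge d" using h[symmetric] by (simp add: hedge_def)
  hence e: "of_int (fst c) + 1/2 = (of_int (fst d)::real)" by (simp add: vedge_def)
  hence "fst d = fst c" by (intro int_pin[of "fst c" "of_int (fst c) + 1/2"]) auto
  hence "of_int (fst c) + 1/2 = (of_int (fst c)::real)" using e by simp
  thus False by simp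
qed

lemma int_two: assumes "(of_int b::real) \<le> of_int j" "(of_int j::real) \<le> of_int b + 1" shows "j = b \<or> j = b + 1"
proof -
  from assms have "b \<le> j" "of_int j \<le> (of_int (b+1)::real)" by simp_all
  hence "b \<le> j" "j \<le> b + 1" by (simp only: of_int_le_iff)+
  thus ?thesis by linarith
qed

lemma mem_region_pair: "p \<in> region T \<Longrightarrow> \<exists>a b. (a,b) \<in> T \<and> p \<in> tile (a,b)"
  by (auto simp: mem_region)

lemma finite_op:
  assumes "finite T" shows "finite (outer_perimeter T)"
proof -
  have "outer_perimeter T \<subseteq> hedge ` (T \<union> (\<lambda>d. (fst d, snd d + 1)) ` T) \<union> vedge ` (T \<union> (\<lambda>d. (fst d + 1, snd d)) ` T)"
  proof
    fix e assume e: "e \<in> outer_perimeter T"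
    hence eR: "e \<subseteq> region T" using frontier_subset_closed[OF closed_region[OF assms]]
      by (auto simp: outer_perimeter_def)
    from e have "e \<in> unit_edges" by (simp add: outer_perimeter_def)
    then obtain c where "e = hedge c \<or> e = vedge c" by (auto simp: unit_edges_def)
    thus "e \<in> hedge ` (T \<union> (\<lambda>d. (fst d, snd d + 1)) ` T) \<union> vedge ` (T \<union> (\<lambda>d. (fst d + 1, snd d)) ` T)"
    proof
      assume ec: "e = hedge c"
      have "(of_int (fst c) + 1/2, of_int (snd c)) \<in> e" by (simp add: ec hedge_def)
      then obtain a b where ab: "(a,b) \<in> T" "(of_int (fst c) + 1/2, of_int (snd c)) \<in> tile (a,b)"
        using eR mem_region_pair by blast
      hence "a = fst c" by (intro int_pin[of "fst c" "of_int (fst c) + 1/2"]) (auto simp: mem_tile)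
      moreover have "snd c = b \<or> snd c = b + 1" using ab by (intro int_two) (auto simp: mem_tile)
      ultimately have "c \<in> T \<union> (\<lambda>d. (fst d, snd d + 1)) ` T" using ab
        by (cases c) (auto intro: image_eqI[of _ _ "(a,b)"])
      thus ?thesis using ec by blast
    next
      assume ec: "e = vedge c"
      have "(of_int (fst c), of_int (snd c) + 1/2) \<in> e" by (simp add: ec vedge_def)
      then obtain a b where ab: "(a,b) \<in> T" "(of_int (fst c), of_int (snd c) + 1/2) \<in> tile (a,b)"
        using eR mem_region_pair by blast
      hence "b = snd c" by (intro int_pin[of "snd c" "of_int (snd c) + 1/2"]) (auto simp: mem_tile)
      moreover have "fst c = a \<or> fst c = a + 1" using ab by (intro int_two) (auto simp: mem_tile)
      ultimately have "c \<in> T \<union> (\<lambda>d. (fst d + 1, snd d)) ` T" using ab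
        by (cases c) (auto intro: image_eqI[of _ _ "(a,b)"])
      thus ?thesis using ec by blast
    qed
  qed
  moreover have "finite (hedge ` (T \<union> (\<lambda>d. (fst d, snd d + 1)) ` T) \<union> vedge ` (T \<union> (\<lambda>d. (fst d + 1, snd d)) ` T))"
    using assms by simp
  ultimately show ?thesis by (rule finite_subset)
qed


lemma final_arith:
  fixes N a b p :: nat
  assumes "N \<le> a * b" "2 * a + 2 * b \<le> p"
  shows "int p \<ge> 2 * \<lceil>2 * sqrt (real N)\<rceil>"
proof -
  have "4 * real N \<le> 4 * (real a * real b)" using assms(1)
    by (metis of_nat_le_iff of_nat_mult mult_le_cancel_left_pos zero_less_numeral)
  also have "\<dots> \<le> (real a + real b)^2"
  proof -
    have "(real a + real b)^2 - 4 * (real a * real b) = (real a - real b)^2"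
      by (simp add: power2_eq_square algebra_simps)
    moreover have "(real a - real b)^2 \<ge> 0" by simp
    ultimately show ?thesis by linarith
  qed
  finally have "sqrt (4 * real N) \<le> sqrt ((real a + real b)^2)" by (rule real_sqrt_le_mono)
  hence "2 * sqrt (real N) \<le> real a + real b" by (simp add: real_sqrt_mult)
  hence "\<lceil>2 * sqrt (real N)\<rceil> \<le> int a + int b" by (simp add: ceiling_le_iff)
  thus ?thesis using assms(2) by linarith
qed

theorem lemma1:
  fixes T :: "(int \<times> int) set"
  assumes "polyomino T"
  shows "int (p_o T) \<ge> 2 * \<lceil>2 * sqrt (real (card T + card (holes T)))\<rceil>"
proof -
  have fin: "finite T" using assms by (simp add: polyomino_def)
  define cols where "cols = fst ` T"
  define rows where "rows = snd ` T"
  have fc: "finite cols" "finite rows" using fin by (simp_all add: cols_def rows_def)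
  have Tsub: "T \<subseteq> cols \<times> rows" by (force simp: cols_def rows_def)
  define colset where "colset i = {j. (i,j) \<in> T}" for i
  define rowset where "rowset j = {i. (i,j) \<in> T}" for j
  have fcs: "finite (colset i)" for i
    by (rule finite_subset[of _ "snd ` T"]) (force simp: colset_def, simp add: fin)
  have frs: "finite (rowset j)" for j
    by (rule finite_subset[of _ "fst ` T"]) (force simp: rowset_def, simp add: fin)
  have ncs: "colset i \<noteq> {}" if "i \<in> cols" for i using that by (force simp: colset_def cols_def)
  have nrs: "rowset j \<noteq> {}" if "j \<in> rows" for j using that by (force simp: rowset_def rows_def)
  define jmin where "jmin i = Min (colset i)" for i
  define jmax where "jmax i = Max (colset i)" for i
  define imin where "imin j = Min (rowset j)" for j
  define imax where "imax j = Max (rowset j)" for j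
  have jmin1: "(i, jmin i) \<in> T" if "i \<in> cols" for i
    using Min_in[OF fcs ncs[OF that]] by (simp add: jmin_def colset_def)
  have jmax1: "(i, jmax i) \<in> T" if "i \<in> cols" for i
    using Max_in[OF fcs ncs[OF that]] by (simp add: jmax_def colset_def)
  have imin1: "(imin j, j) \<in> T" if "j \<in> rows" for j
    using Min_in[OF frs nrs[OF that]] by (simp add: imin_def rowset_def)
  have imax1: "(imax j, j) \<in> T" if "j \<in> rows" for j
    using Max_in[OF frs nrs[OF that]] by (simp add: imax_def rowset_def)
  have jmin2: "jmin i \<le> j" if "(i,j) \<in> T" for i j
    using Min_le[OF fcs, of j i] that by (simp add: jmin_def colset_def)
  have jmax2: "j \<le> jmax i" if "(i,j) \<in> T" for i j
    using Max_ge[OF fcs, of j i] that by (simp add: jmax_def colset_def)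
  have imin2: "imin j \<le> i" if "(i,j) \<in> T" for i j
    using Min_le[OF frs, of i j] that by (simp add: imin_def rowset_def)
  have imax2: "i \<le> imax j" if "(i,j) \<in> T" for i j
    using Max_ge[OF frs, of i j] that by (simp add: imax_def rowset_def)
  define E1 where "E1 = (\<lambda>i. hedge (i, jmin i)) ` cols"
  define E2 where "E2 = (\<lambda>i. hedge (i, jmax i + 1)) ` cols"
  define E3 where "E3 = (\<lambda>j. vedge (imin j, j)) ` rows"
  define E4 where "E4 = (\<lambda>j. vedge (imax j + 1, j)) ` rows"
  have sub: "E1 \<union> E2 \<union> E3 \<union> E4 \<subseteq> outer_perimeter T"
    unfolding E1_def E2_def E3_def E4_def
    using edge_bottom[OF jmin1 jmin2] edge_top[OF jmax1 jmax2]
      edge_left[OF imin1 imin2] edge_right[OF imax1 imax2]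
    by blast
  have c1: "card E1 = card cols" unfolding E1_def
    by (rule card_image) (auto intro!: inj_onI dest: hedge_inj)
  have c2: "card E2 = card cols" unfolding E2_def
    by (rule card_image) (auto intro!: inj_onI dest: hedge_inj)
  have c3: "card E3 = card rows" unfolding E3_def
    by (rule card_image) (auto intro!: inj_onI dest: vedge_inj)
  have c4: "card E4 = card rows" unfolding E4_def
    by (rule card_image) (auto intro!: inj_onI dest: vedge_inj)
  have d12: "E1 \<inter> E2 = {}"
  proof -
    have "jmin i \<le> jmax i" if "i \<in> cols" for i using jmin2[OF jmax1[OF that]] .
    thus ?thesis unfolding E1_def E2_def by (force dest: hedge_inj)
  qed
  have d34: "E3 \<inter> E4 = {}"
  proof -
    have "imin j \<le> imax j" if "j \<in> rows" for j using imin2[OF imax1[OF that]] .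
    thus ?thesis unfolding E3_def E4_def by (force dest: vedge_inj)
  qed
  have d: "(E1 \<union> E2) \<inter> (E3 \<union> E4) = {}"
    unfolding E1_def E2_def E3_def E4_def using hedge_ne_vedge by blast
  have fE: "finite E1" "finite E2" "finite E3" "finite E4"
    using fc by (simp_all add: E1_def E2_def E3_def E4_def)
  have "card (E1 \<union> E2 \<union> E3 \<union> E4) = 2 * card cols + 2 * card rows"
  proof -
    have "card (E1 \<union> E2 \<union> (E3 \<union> E4)) = card (E1 \<union> E2) + card (E3 \<union> E4)"
      using fE d by (intro card_Un_disjoint) auto
    also have "card (E1 \<union> E2) = card E1 + card E2" using fE d12 by (intro card_Un_disjoint) auto
    also have "card (E3 \<union> E4) = card E3 + card E4" using fE d34 by (intro card_Un_disjoint) auto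
    finally show ?thesis using c1 c2 c3 c4 by (simp add: Un_assoc)
  qed
  hence pbound: "2 * card cols + 2 * card rows \<le> p_o T"
    unfolding p_o_def using card_mono[OF finite_op[OF fin] sub] by simp
  have "\<forall>H\<in>holes T. \<exists>c. c \<in> (cols \<times> rows) - T \<and> ocell c \<subseteq> H"
    using hole_cell[OF fin] by (force simp: cols_def rows_def)
  then obtain f where f: "\<And>H. H \<in> holes T \<Longrightarrow> f H \<in> (cols \<times> rows) - T \<and> ocell (f H) \<subseteq> H"
    by metis
  have "inj_on f (holes T)"
  proof (rule inj_onI)
    fix H H' assume HH: "H \<in> holes T" "H' \<in> holes T" "f H = f H'"
    have "ocell (f H) \<noteq> {}" by (simp add: ocell_def)
    moreover have "ocell (f H) \<subseteq> H" using f[OF HH(1)] by simp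
    moreover have "ocell (f H) \<subseteq> H'" using f[OF HH(2)] HH(3) by simp
    ultimately have "H \<inter> H' \<noteq> {}" by blast
    moreover have "H \<in> components (- region T)" "H' \<in> components (- region T)"
      using HH by (auto simp: holes_def)
    ultimately show "H = H'" using components_nonoverlap[of H "- region T" H'] by blast
  qed
  moreover have "f ` holes T \<subseteq> (cols \<times> rows) - T" using f by blast
  moreover have "finite ((cols \<times> rows) - T)" using fc by simp
  ultimately have "card (holes T) \<le> card ((cols \<times> rows) - T)"
    by (intro card_inj_on_le)
  also have "\<dots> = card cols * card rows - card T"
    using Tsub fin fc by (simp add: card_Diff_subset card_cartesian_product)
  finally have "card T + card (holes T) \<le> card cols * card rows"
    using card_mono[OF finite_cartesian_product[OF fc] Tsub] by (simp add: card_cartesian_product)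
  thus ?thesis using pbound by (rule final_arith)
qed

end
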